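(* Let $\mathbb K$ be an algebraically closed field of characteristic $0$. Let $\sigma=\sum_{i=1}^r\omega_i\mathbf e_{\xi_i}(\mathbf y)$ with $\omega_i\in\mathbb K\setminus\{0\}$ and $\xi_1,\dots,\xi_r\in\mathbb K^n$ pairwise distinct. Let $g\in\mathbb K[\mathbf x]$ separate the points, i.e. $g(\xi_i)\ne g(\xi_j)$ for $i\ne j$. Then for each $i$, the set of $v\in\mathcal A_\sigma$ with $\mathcal H_{g\star\sigma}(v)=g(\xi_i)\mathcal H_\sigma(v)$ is one dimensional. For any nonzero such $v_i$ ($i=1,\dots,r$), the elements $v_1,\dots,v_r$ are linearly independent, $v_i(\xi_i)\ne0$, and $$\langle\sigma\mid x_jv_i\rangle=\xi_{i,j}\,\langle\sigma\mid v_i\rangle\quad(j=1,\dots,n,\ i=1,\dots,r),$$ $$\sigma(\mathbf y)=\sum_{i=1}^r\frac{\langle\sigma\mid v_i\rangle}{v_i(\xi_i)}\,\mathbf e_{\xi_i}(\mathbf y).$$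
   Context: $\mathbb K[[\mathbf y]]$ is identified with the dual of $\mathbb K[\mathbf x]$ via $\langle\mathbf y^\alpha\mid\mathbf x^\beta\rangle=\alpha!\,\delta_{\alpha\beta}$. $p\star\sigma$ is defined by $\langle p\star\sigma\mid q\rangle=\langle\sigma\mid pq\rangle$. $I_\sigma=\ker(p\mapsto p\star\sigma)$ and $\mathcal A_\sigma=\mathbb K[\mathbf x]/I_\sigma$. $\mathcal H_\sigma:\mathcal A_\sigma\to\mathcal A_\sigma^*\cong I_\sigma^\perp$ is $p\mapsto p\star\sigma$, and $\mathcal H_{g\star\sigma}(p)=(gp)\star\sigma$. Values $v(\xi_i)$ and $\langle\sigma\mid v\rangle$ are well defined for $v\in\mathcal A_\sigma$, since $\xi_i$ is a common zero of $I_\sigma$ and $\sigma$ vanishes on $I_\sigma$. $\mathbf e_\xi(\mathbf y)=\exp(\sum_j\xi_jy_j)$, and $\xi_{i,j}$ is the $j$-th coordinate of $\xi_i$. *)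

theory Defs
  imports "HOL-Computational_Algebra.Polynomial" "HOL-Library.Poly_Mapping"
begin

text \<open>Formal power series K[[y]] as arbitrary coefficient functions on monomials.\<close>

type_synonym ('n, 'a) mpoly = "('n \<Rightarrow>\<^sub>0 nat) \<Rightarrow>\<^sub>0 'a"
type_synonym ('n, 'a) fps_y = "('n \<Rightarrow>\<^sub>0 nat) \<Rightarrow> 'a"

definition mfact :: "('n \<Rightarrow>\<^sub>0 nat) \<Rightarrow> nat" where
  "mfact \<alpha> = (\<Prod>j\<in>Poly_Mapping.keys \<alpha>. fact (Poly_Mapping.lookup \<alpha> j))"

definition mmono :: "('n \<Rightarrow>\<^sub>0 nat) \<Rightarrow> ('n, 'a::comm_ring_1) mpoly" where
  "mmono \<alpha> = Poly_Mapping.single \<alpha> 1"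

definition mvar :: "'n \<Rightarrow> ('n, 'a::comm_ring_1) mpoly" where
  "mvar j = mmono (Poly_Mapping.single j 1)"

definition mconst :: "'a::comm_ring_1 \<Rightarrow> ('n, 'a) mpoly" where
  "mconst c = Poly_Mapping.single 0 c"

definition meval :: "('n, 'a::comm_ring_1) mpoly \<Rightarrow> ('n \<Rightarrow> 'a) \<Rightarrow> 'a" where
  "meval p \<xi> = (\<Sum>\<alpha>\<in>Poly_Mapping.keys p. Poly_Mapping.lookup p \<alpha> * (\<Prod>j\<in>Poly_Mapping.keys \<alpha>. \<xi> j ^ Poly_Mapping.lookup \<alpha> j))"

text \<open>Pairing  <y^a | x^b> = a! delta_ab.\<close>
definition pairing :: "('n, 'a::field_char_0) fps_y \<Rightarrow> ('n, 'a) mpoly \<Rightarrow> 'a" where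
  "pairing \<sigma> p = (\<Sum>\<alpha>\<in>Poly_Mapping.keys p. \<sigma> \<alpha> * of_nat (mfact \<alpha>) * Poly_Mapping.lookup p \<alpha>)"

text \<open>p \<star> \<sigma>, characterised by <p \<star> \<sigma> | q> = <\<sigma> | p q>.\<close>
definition star :: "('n, 'a::field_char_0) mpoly \<Rightarrow> ('n, 'a) fps_y \<Rightarrow> ('n, 'a) fps_y" where
  "star p \<sigma> = (\<lambda>\<alpha>. pairing \<sigma> (p * mmono \<alpha>) / of_nat (mfact \<alpha>))"

text \<open>Hankel operator H_\<sigma>(p) = p \<star> \<sigma> (on representatives of A_\<sigma>).\<close>
definition hankel :: "('n, 'a::field_char_0) fps_y \<Rightarrow> ('n, 'a) mpoly \<Rightarrow> ('n, 'a) fps_y" where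
  "hankel \<sigma> p = star p \<sigma>"

definition I_sigma :: "('n, 'a::field_char_0) fps_y \<Rightarrow> ('n, 'a) mpoly set" where
  "I_sigma \<sigma> = {p. star p \<sigma> = (\<lambda>_. 0)}"

text \<open>Exponential series e_\<xi>(y) = exp(\<Sum>_j \<xi>_j y_j).\<close>
definition exp_y :: "('n \<Rightarrow> 'a::field_char_0) \<Rightarrow> ('n, 'a) fps_y" where
  "exp_y \<xi> = (\<lambda>\<alpha>. (\<Prod>j\<in>Poly_Mapping.keys \<alpha>. \<xi> j ^ Poly_Mapping.lookup \<alpha> j) / of_nat (mfact \<alpha>))"

end

theory Submission imports Defs begin

definition mon :: "('n \<Rightarrow>\<^sub>0 nat) \<Rightarrow> ('n \<Rightarrow> 'a::comm_ring_1) \<Rightarrow> 'a" where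
  "mon \<alpha> \<xi> = (\<Prod>j\<in>Poly_Mapping.keys \<alpha>. \<xi> j ^ Poly_Mapping.lookup \<alpha> j)"

lemma mon_UNIV: "mon \<alpha> (\<xi>::'n::finite \<Rightarrow> 'a::comm_ring_1) = (\<Prod>j\<in>UNIV. \<xi> j ^ Poly_Mapping.lookup \<alpha> j)"
  unfolding mon_def
  by (rule prod.mono_neutral_left) (auto simp: in_keys_iff)

lemma mon_add: "mon (\<alpha> + \<beta>) (\<xi>::'n::finite \<Rightarrow> 'a::comm_ring_1) = mon \<alpha> \<xi> * mon \<beta> \<xi>"
  by (simp add: mon_UNIV lookup_add power_add prod.distrib)

lemma mon_zero[simp]: "mon 0 \<xi> = 1"
  by (simp add: mon_def)

lemma mon_var: "mon (Poly_Mapping.single j 1) (\<xi>::'n \<Rightarrow> 'a::comm_ring_1) = \<xi> j"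
proof -
  have "Poly_Mapping.keys (Poly_Mapping.single j (1::nat)) = {j}" by simp
  thus ?thesis unfolding mon_def by simp
qed

lemma meval_S: "finite S \<Longrightarrow> Poly_Mapping.keys p \<subseteq> S \<Longrightarrow>
   meval p \<xi> = (\<Sum>\<alpha>\<in>S. Poly_Mapping.lookup p \<alpha> * mon \<alpha> \<xi>)"
  unfolding meval_def mon_def
  by (rule sum.mono_neutral_left) (auto simp: in_keys_iff)

lemma meval_add: "meval (p + q) \<xi> = meval p \<xi> + meval q \<xi>"
proof -
  let ?S = "Poly_Mapping.keys p \<union> Poly_Mapping.keys q"
  have "meval (p + q) \<xi> = (\<Sum>\<alpha>\<in>?S. Poly_Mapping.lookup (p+q) \<alpha> * mon \<alpha> \<xi>)"
    by (rule meval_S) (auto dest: subsetD[OF keys_add])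
  also have "\<dots> = (\<Sum>\<alpha>\<in>?S. Poly_Mapping.lookup p \<alpha> * mon \<alpha> \<xi>) + (\<Sum>\<alpha>\<in>?S. Poly_Mapping.lookup q \<alpha> * mon \<alpha> \<xi>)"
    by (simp add: lookup_add distrib_right sum.distrib)
  also have "\<dots> = meval p \<xi> + meval q \<xi>"
    by (subst (1 2) meval_S[of ?S]) auto
  finally show ?thesis .
qed

lemma meval_single: "meval (Poly_Mapping.single \<alpha> a) \<xi> = a * mon \<alpha> \<xi>"
  by (simp add: meval_def mon_def)

lemma meval_zero[simp]: "meval 0 \<xi> = 0"
  by (simp add: meval_def)

lemma meval_sum: "finite A \<Longrightarrow> meval (\<Sum>i\<in>A. f i) \<xi> = (\<Sum>i\<in>A. meval (f i) \<xi>)"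
  by (induction A rule: finite_induct) (auto simp: meval_add)

lemma poly_expand: "p = (\<Sum>\<alpha>\<in>Poly_Mapping.keys p. Poly_Mapping.single \<alpha> (Poly_Mapping.lookup p \<alpha>))"
  by (rule poly_mapping_eqI) (auto simp: lookup_sum lookup_single when_def in_keys_iff)

lemma meval_mult: "meval (p * q) (\<xi>::'n::finite \<Rightarrow> 'a::comm_ring_1) = meval p \<xi> * meval q \<xi>"
proof -
  let ?A = "Poly_Mapping.keys p" and ?B = "Poly_Mapping.keys q"
  have "p * q = (\<Sum>\<alpha>\<in>?A. Poly_Mapping.single \<alpha> (Poly_Mapping.lookup p \<alpha>)) * (\<Sum>\<beta>\<in>?B. Poly_Mapping.single \<beta> (Poly_Mapping.lookup q \<beta>))"
    using poly_expand[of p] poly_expand[of q] by simp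
  also have "\<dots> = (\<Sum>\<alpha>\<in>?A. \<Sum>\<beta>\<in>?B. Poly_Mapping.single (\<alpha>+\<beta>) (Poly_Mapping.lookup p \<alpha> * Poly_Mapping.lookup q \<beta>))"
    by (simp add: sum_product mult_single)
  finally have "meval (p*q) \<xi> = (\<Sum>\<alpha>\<in>?A. \<Sum>\<beta>\<in>?B. (Poly_Mapping.lookup p \<alpha> * mon \<alpha> \<xi>) * (Poly_Mapping.lookup q \<beta> * mon \<beta> \<xi>))"
    by (simp add: meval_sum meval_single mon_add mult_ac)
  also have "\<dots> = meval p \<xi> * meval q \<xi>"
    by (simp add: meval_def mon_def sum_product)
  finally show ?thesis .
qed

lemma meval_diff: "meval (p - q) \<xi> = meval p \<xi> - meval (q::('n, 'a::comm_ring_1) mpoly) \<xi>"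
  using meval_add[of "p - q" q \<xi>] by simp

lemma meval_one: "meval 1 \<xi> = 1"
  using meval_single[of 0 1 \<xi>] by simp

lemma meval_prod: "finite A \<Longrightarrow> meval (\<Prod>i\<in>A. f i) (\<xi>::'n::finite \<Rightarrow> 'a::comm_ring_1) = (\<Prod>i\<in>A. meval (f i) \<xi>)"
  by (induction A rule: finite_induct) (auto simp: meval_mult meval_one)

lemma meval_mconst: "meval (mconst c) \<xi> = c"
  by (simp add: mconst_def meval_single)

lemma meval_mvar: "meval (mvar j) \<xi> = \<xi> j"
  unfolding mvar_def mmono_def meval_single mon_var by simp

lemma meval_mmono: "meval (mmono \<alpha>) \<xi> = mon \<alpha> \<xi>"
  by (simp add: mmono_def meval_single)

lemma mfact_pos: "mfact \<alpha> > 0" unfolding mfact_def by (rule prod_pos) auto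

lemma mfact_nz: "(of_nat (mfact \<alpha>) :: 'a::field_char_0) \<noteq> 0"
proof -
  have "mfact \<alpha> > 0" unfolding mfact_def by (rule prod_pos) auto
  thus ?thesis by simp
qed

lemma exp_y_mon: "exp_y \<xi> \<alpha> = mon \<alpha> \<xi> / of_nat (mfact \<alpha>)"
  by (simp add: exp_y_def mon_def)

definition comb :: "nat \<Rightarrow> (nat \<Rightarrow> 'n \<Rightarrow> 'a::field_char_0) \<Rightarrow> (nat \<Rightarrow> 'a) \<Rightarrow> ('n,'a) fps_y" where
  "comb r \<xi> w = (\<lambda>\<alpha>. \<Sum>k<r. w k * exp_y (\<xi> k) \<alpha>)"

lemma pairing_comb: "pairing (comb r \<xi> w) p = (\<Sum>k<r. w k * meval p (\<xi> k))"
proof -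
  have "pairing (comb r \<xi> w) p = (\<Sum>\<alpha>\<in>Poly_Mapping.keys p. \<Sum>k<r. w k * (mon \<alpha> (\<xi> k) * Poly_Mapping.lookup p \<alpha>))"
    unfolding pairing_def comb_def
  proof (intro sum.cong refl)
    fix \<alpha>
    have "(\<Sum>k<r. w k * exp_y (\<xi> k) \<alpha>) * of_nat (mfact \<alpha>) * Poly_Mapping.lookup p \<alpha>
      = (\<Sum>k<r. w k * exp_y (\<xi> k) \<alpha> * of_nat (mfact \<alpha>) * Poly_Mapping.lookup p \<alpha>)"
      by (simp add: sum_distrib_right)
    also have "\<dots> = (\<Sum>k<r. w k * (mon \<alpha> (\<xi> k) * Poly_Mapping.lookup p \<alpha>))"
      by (intro sum.cong refl) (simp add: exp_y_mon mfact_nz mfact_pos)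
    finally show "(\<Sum>k<r. w k * exp_y (\<xi> k) \<alpha>) * of_nat (mfact \<alpha>) * Poly_Mapping.lookup p \<alpha>
      = (\<Sum>k<r. w k * (mon \<alpha> (\<xi> k) * Poly_Mapping.lookup p \<alpha>))" .
  qed
  also have "\<dots> = (\<Sum>k<r. w k * meval p (\<xi> k))"
    by (subst sum.swap) (simp add: meval_def mon_def sum_distrib_left mult_ac)
  finally show ?thesis .
qed

lemma star_comb: "star p (comb r (\<xi> :: nat \<Rightarrow> 'n::finite \<Rightarrow> 'a::field_char_0) w) = comb r \<xi> (\<lambda>k. w k * meval p (\<xi> k))"
  unfolding star_def pairing_comb
  by (rule ext) (simp add: comb_def meval_mult meval_mmono exp_y_mon sum_divide_distrib mult_ac)

lemma pairing_zero: "pairing (\<lambda>_. 0) p = 0"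
  by (simp add: pairing_def)

lemma sum_single_nz: "m < (r::nat) \<Longrightarrow> (\<forall>k<r. k \<noteq> m \<longrightarrow> f k = 0) \<Longrightarrow> (\<Sum>k<r. f k) = (f m :: 'a::comm_monoid_add)"
  by (subst sum.remove[of "{..<r}" m]) (auto intro!: sum.neutral)

lemma comb_eq_iff:
  assumes L: "\<forall>m<r. \<forall>k<r. meval (L m) (\<xi> k) = (if k = m then 1 else (0::'a::field_char_0))"
  shows "comb r \<xi> a = comb r \<xi> b \<longleftrightarrow> (\<forall>k<r. a k = b k)"
proof
  assume h: "comb r \<xi> a = comb r \<xi> b"
  have "comb r \<xi> (\<lambda>k. a k - b k) = (\<lambda>_. 0)"
    using h unfolding comb_def fun_eq_iff
    by (simp add: left_diff_distrib sum_subtractf)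
  show "\<forall>k<r. a k = b k"
  proof (intro allI impI)
    fix m assume m: "m < r"
    have "0 = pairing (comb r \<xi> (\<lambda>k. a k - b k)) (L m)"
      using \<open>comb r \<xi> (\<lambda>k. a k - b k) = (\<lambda>_. 0)\<close> by (simp add: pairing_zero)
    also have "\<dots> = (\<Sum>k<r. (a k - b k) * (if k = m then 1 else 0))"
      unfolding pairing_comb using L m by (intro sum.cong) auto
    also have "\<dots> = a m - b m" using m by (subst sum_single_nz[of m]) auto
    finally show "a m = b m" by simp
  qed
next
  assume "\<forall>k<r. a k = b k"
  thus "comb r \<xi> a = comb r \<xi> b" unfolding comb_def by (intro ext sum.cong) auto
qed

theorem proposition3:
  fixes \<omega> :: "nat \<Rightarrow> 'a::{alg_closed_field, field_char_0}"
    and \<xi> :: "nat \<Rightarrow> ('n::finite \<Rightarrow> 'a)"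
    and r :: nat
    and \<sigma> :: "('n, 'a) fps_y"
    and g :: "('n, 'a) mpoly"
  assumes \<sigma>_def: "\<sigma> = (\<lambda>\<alpha>. \<Sum>i<r. \<omega> i * exp_y (\<xi> i) \<alpha>)"
    and \<omega>_nz: "\<forall>i<r. \<omega> i \<noteq> 0"
    and \<xi>_dist: "\<forall>i<r. \<forall>j<r. i \<noteq> j \<longrightarrow> \<xi> i \<noteq> \<xi> j"
    and g_sep: "\<forall>i<r. \<forall>j<r. i \<noteq> j \<longrightarrow> meval g (\<xi> i) \<noteq> meval g (\<xi> j)"
  shows "(\<forall>i<r. \<exists>v0. hankel (star g \<sigma>) v0 = (\<lambda>\<alpha>. meval g (\<xi> i) * hankel \<sigma> v0 \<alpha>)
            \<and> v0 \<notin> I_sigma \<sigma>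
            \<and> (\<forall>v. hankel (star g \<sigma>) v = (\<lambda>\<alpha>. meval g (\<xi> i) * hankel \<sigma> v \<alpha>)
                   \<longrightarrow> (\<exists>c. v - mconst c * v0 \<in> I_sigma \<sigma>)))
       \<and> (\<forall>v :: nat \<Rightarrow> ('n, 'a) mpoly.
            (\<forall>i<r. hankel (star g \<sigma>) (v i) = (\<lambda>\<alpha>. meval g (\<xi> i) * hankel \<sigma> (v i) \<alpha>)
                   \<and> v i \<notin> I_sigma \<sigma>)
            \<longrightarrow> (\<forall>c. (\<Sum>i<r. mconst (c i) * v i) \<in> I_sigma \<sigma> \<longrightarrow> (\<forall>i<r. c i = 0))
              \<and> (\<forall>i<r. meval (v i) (\<xi> i) \<noteq> 0)
              \<and> (\<forall>i<r. \<forall>j. pairing \<sigma> (mvar j * v i) = \<xi> i j * pairing \<sigma> (v i))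
              \<and> \<sigma> = (\<lambda>\<alpha>. \<Sum>i<r. pairing \<sigma> (v i) / meval (v i) (\<xi> i) * exp_y (\<xi> i) \<alpha>))"
proof -
  define L where "L m = (\<Prod>k\<in>{..<r}-{m}. mconst (inverse (meval g (\<xi> m) - meval g (\<xi> k))) * (g - mconst (meval g (\<xi> k))))" for m
  have L: "\<forall>m<r. \<forall>k<r. meval (L m) (\<xi> k) = (if k = m then 1 else 0)"
  proof (intro allI impI)
    fix m k assume m: "m<r" and k: "k<r"
    have ev: "meval (L m) (\<xi> k) = (\<Prod>l\<in>{..<r}-{m}. inverse (meval g (\<xi> m) - meval g (\<xi> l)) * (meval g (\<xi> k) - meval g (\<xi> l)))"
      unfolding L_def by (simp add: meval_prod meval_mult meval_diff meval_mconst)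
    show "meval (L m) (\<xi> k) = (if k = m then 1 else 0)"
    proof (cases "k = m")
      case True then show ?thesis using ev g_sep m by (auto intro!: prod.neutral)
    next
      case False
      then have "k \<in> {..<r}-{m}" using k by auto
      then show ?thesis using ev False by (auto intro!: prod_zero)
    qed
  qed
  have sig: "\<sigma> = comb r \<xi> \<omega>" by (simp add: \<sigma>_def comb_def)
  have I_iff: "p \<in> I_sigma \<sigma> \<longleftrightarrow> (\<forall>k<r. meval p (\<xi> k) = 0)" for p
  proof -
    have "p \<in> I_sigma \<sigma> \<longleftrightarrow> comb r \<xi> (\<lambda>k. \<omega> k * meval p (\<xi> k)) = comb r \<xi> (\<lambda>_. 0)"
      by (simp add: I_sigma_def sig star_comb) (simp add: comb_def)
    also have "\<dots> \<longleftrightarrow> (\<forall>k<r. \<omega> k * meval p (\<xi> k) = 0)" by (rule comb_eq_iff[OF L])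
    also have "\<dots> \<longleftrightarrow> (\<forall>k<r. meval p (\<xi> k) = 0)" using \<omega>_nz by auto
    finally show ?thesis .
  qed
  have eig: "hankel (star g \<sigma>) v = (\<lambda>\<alpha>. meval g (\<xi> i) * hankel \<sigma> v \<alpha>) \<longleftrightarrow> (\<forall>k<r. k \<noteq> i \<longrightarrow> meval v (\<xi> k) = 0)"
    if i: "i < r" for i v
  proof -
    have 1: "hankel (star g \<sigma>) v = comb r \<xi> (\<lambda>k. \<omega> k * meval g (\<xi> k) * meval v (\<xi> k))"
      by (simp add: hankel_def sig star_comb)
    have 2: "(\<lambda>\<alpha>. meval g (\<xi> i) * hankel \<sigma> v \<alpha>) = comb r \<xi> (\<lambda>k. meval g (\<xi> i) * (\<omega> k * meval v (\<xi> k)))"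
      by (simp add: hankel_def sig star_comb) (simp add: comb_def sum_distrib_left mult_ac)
    have 3: "(\<omega> k * meval g (\<xi> k) * meval v (\<xi> k) = meval g (\<xi> i) * (\<omega> k * meval v (\<xi> k)))
       \<longleftrightarrow> (k \<noteq> i \<longrightarrow> meval v (\<xi> k) = 0)" if k: "k < r" for k
    proof (cases "k = i")
      case True then show ?thesis by simp
    next
      case False
      have "(\<omega> k * meval g (\<xi> k) * meval v (\<xi> k) = meval g (\<xi> i) * (\<omega> k * meval v (\<xi> k)))
         \<longleftrightarrow> \<omega> k * meval v (\<xi> k) * (meval g (\<xi> k) - meval g (\<xi> i)) = 0"
        by (simp add: algebra_simps)
      also have "\<dots> \<longleftrightarrow> meval v (\<xi> k) = 0"
        using \<omega>_nz g_sep k i False by auto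
      finally show ?thesis using False by simp
    qed
    show ?thesis unfolding 1 2 comb_eq_iff[OF L] using 3 by auto
  qed
  show ?thesis
  proof (intro conjI)
    show "\<forall>i<r. \<exists>v0. hankel (star g \<sigma>) v0 = (\<lambda>\<alpha>. meval g (\<xi> i) * hankel \<sigma> v0 \<alpha>)
            \<and> v0 \<notin> I_sigma \<sigma>
            \<and> (\<forall>v. hankel (star g \<sigma>) v = (\<lambda>\<alpha>. meval g (\<xi> i) * hankel \<sigma> v \<alpha>)
                   \<longrightarrow> (\<exists>c. v - mconst c * v0 \<in> I_sigma \<sigma>))"
  proof (intro allI impI)
    fix i assume i: "i < r"
    show "\<exists>v0. hankel (star g \<sigma>) v0 = (\<lambda>\<alpha>. meval g (\<xi> i) * hankel \<sigma> v0 \<alpha>)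
            \<and> v0 \<notin> I_sigma \<sigma>
            \<and> (\<forall>v. hankel (star g \<sigma>) v = (\<lambda>\<alpha>. meval g (\<xi> i) * hankel \<sigma> v \<alpha>)
                   \<longrightarrow> (\<exists>c. v - mconst c * v0 \<in> I_sigma \<sigma>))"
    proof (intro exI conjI allI impI)
      show "hankel (star g \<sigma>) (L i) = (\<lambda>\<alpha>. meval g (\<xi> i) * hankel \<sigma> (L i) \<alpha>)"
        using eig[OF i] L i by auto
      show "L i \<notin> I_sigma \<sigma>" using I_iff L i by auto
      fix v assume "hankel (star g \<sigma>) v = (\<lambda>\<alpha>. meval g (\<xi> i) * hankel \<sigma> v \<alpha>)"
      hence hv: "\<forall>k<r. k \<noteq> i \<longrightarrow> meval v (\<xi> k) = 0" using eig[OF i] by simp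
      show "v - mconst (meval v (\<xi> i)) * L i \<in> I_sigma \<sigma>"
        unfolding I_iff using hv L i by (auto simp: meval_diff meval_mult meval_mconst)
    qed
  qed
  next
    show "\<forall>v :: nat \<Rightarrow> ('n, 'a) mpoly.
            (\<forall>i<r. hankel (star g \<sigma>) (v i) = (\<lambda>\<alpha>. meval g (\<xi> i) * hankel \<sigma> (v i) \<alpha>)
                   \<and> v i \<notin> I_sigma \<sigma>)
            \<longrightarrow> (\<forall>c. (\<Sum>i<r. mconst (c i) * v i) \<in> I_sigma \<sigma> \<longrightarrow> (\<forall>i<r. c i = 0))
              \<and> (\<forall>i<r. meval (v i) (\<xi> i) \<noteq> 0)
              \<and> (\<forall>i<r. \<forall>j. pairing \<sigma> (mvar j * v i) = \<xi> i j * pairing \<sigma> (v i))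
              \<and> \<sigma> = (\<lambda>\<alpha>. \<Sum>i<r. pairing \<sigma> (v i) / meval (v i) (\<xi> i) * exp_y (\<xi> i) \<alpha>)"
  proof (intro allI impI)
    fix v :: "nat \<Rightarrow> ('n, 'a) mpoly"
    assume H: "\<forall>i<r. hankel (star g \<sigma>) (v i) = (\<lambda>\<alpha>. meval g (\<xi> i) * hankel \<sigma> (v i) \<alpha>)
                   \<and> v i \<notin> I_sigma \<sigma>"
    have vz: "\<forall>k<r. k \<noteq> i \<longrightarrow> meval (v i) (\<xi> k) = 0" if "i < r" for i
      using H eig that by blast
    have vnz: "meval (v i) (\<xi> i) \<noteq> 0" if i: "i < r" for i
    proof
      assume "meval (v i) (\<xi> i) = 0"
      hence "v i \<in> I_sigma \<sigma>" unfolding I_iff using vz[OF i] by auto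
      thus False using H i by auto
    qed
    have pv: "pairing \<sigma> p = (\<Sum>k<r. \<omega> k * meval p (\<xi> k))" for p
      by (simp add: sig pairing_comb)
    have pvi: "pairing \<sigma> (v i) = \<omega> i * meval (v i) (\<xi> i)" if i: "i < r" for i
      unfolding pv using vz[OF i] i by (intro sum_single_nz) auto
    have P2: "\<forall>i<r. meval (v i) (\<xi> i) \<noteq> 0" using vnz by auto
    have P1: "\<forall>c. (\<Sum>i<r. mconst (c i) * v i) \<in> I_sigma \<sigma> \<longrightarrow> (\<forall>i<r. c i = 0)"
    proof (intro allI impI)
      fix c m assume hs: "(\<Sum>i<r. mconst (c i) * v i) \<in> I_sigma \<sigma>" and m: "m < r"
      have "0 = meval (\<Sum>i<r. mconst (c i) * v i) (\<xi> m)" using hs m unfolding I_iff by auto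
      also have "\<dots> = (\<Sum>i<r. c i * meval (v i) (\<xi> m))"
        by (simp add: meval_sum meval_mult meval_mconst)
      also have "\<dots> = c m * meval (v m) (\<xi> m)"
        using vz m by (intro sum_single_nz) auto
      finally show "c m = 0" using vnz[OF m] by simp
    qed
    have P3: "\<forall>i<r. \<forall>j. pairing \<sigma> (mvar j * v i) = \<xi> i j * pairing \<sigma> (v i)"
    proof (intro allI impI)
      fix i j assume i: "i < r"
      have "pairing \<sigma> (mvar j * v i) = \<omega> i * (\<xi> i j * meval (v i) (\<xi> i))"
        unfolding pv meval_mult meval_mvar using vz[OF i] i by (intro sum_single_nz) auto
      thus "pairing \<sigma> (mvar j * v i) = \<xi> i j * pairing \<sigma> (v i)" using pvi[OF i] by simp
    qed
    have e: "(\<lambda>\<alpha>. \<Sum>i<r. pairing \<sigma> (v i) / meval (v i) (\<xi> i) * exp_y (\<xi> i) \<alpha>) = (\<lambda>\<alpha>. \<Sum>i<r. \<omega> i * exp_y (\<xi> i) \<alpha>)"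
      using pvi vnz by (intro ext sum.cong) auto
    have P4: "\<sigma> = (\<lambda>\<alpha>. \<Sum>i<r. pairing \<sigma> (v i) / meval (v i) (\<xi> i) * exp_y (\<xi> i) \<alpha>)"
      by (rule trans[OF \<sigma>_def e[symmetric]])
    show "(\<forall>c. (\<Sum>i<r. mconst (c i) * v i) \<in> I_sigma \<sigma> \<longrightarrow> (\<forall>i<r. c i = 0))
              \<and> (\<forall>i<r. meval (v i) (\<xi> i) \<noteq> 0)
              \<and> (\<forall>i<r. \<forall>j. pairing \<sigma> (mvar j * v i) = \<xi> i j * pairing \<sigma> (v i))
              \<and> \<sigma> = (\<lambda>\<alpha>. \<Sum>i<r. pairing \<sigma> (v i) / meval (v i) (\<xi> i) * exp_y (\<xi> i) \<alpha>)"
      using P1 P2 P3 P4 by blast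
  qed
  qed
qed

end
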